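(* Let $A$ be a $p$-torsion free ring with a ring endomorphism $\phi:A\to A$ satisfying $\phi(a)\equiv a^p\pmod{pA}$ for all $a\in A$, and let $n\ge1$. Regard $W_n(A)$ as an $A$-module via $s_\phi$. Then the map \[ \Psi_n:W_n(A)\to A\oplus\phi_*A\oplus\cdots\oplus\phi^{n-1}_*A, \] \[ (a_0,\dots,a_{n-1})\mapsto\Big(a_0,\ \Delta_1(a_0)+a_1,\ \dots,\ \Delta_{n-1}(a_0)+\Delta_{n-2}(a_1)+\cdots+\Delta_1(a_{n-2})+a_{n-1}\Big) \] is an isomorphism of $A$-modules.
   Context: $W(A)$, $W_n(A)$ are the rings of $p$-typical Witt vectors (of length $n$), with Teichmüller lift $[a]$, Verschiebung $V$ and ghost components $\varphi_m(a_0,a_1,\dots)=\sum_{i=0}^m p^ia_i^{p^{m-i}}$. There is a unique ring map $s_\phi:A\to W(A)$ with $\varphi_m(s_\phi(a))=\phi^m(a)$ for all $m$; its composite with the restriction $W(A)\to W_n(A)$ is also denoted $s_\phi$. Define $\Delta_{W_n}:W_n(A)\to W_{n-1}(A)$ by $V\Delta_{W_n}(\alpha)=\alpha-s_\phi(a_0)$ for $\alpha=(a_0,\dots,a_{n-1})$. For $a\in A$ set $\Delta_0(a)=a$ and, for $s\ge1$, $\Delta_s(a)=\Delta_{W_2}\circ\Delta_{W_3}\circ\cdots\circ\Delta_{W_{s+1}}([a])\in A=W_1(A)$. $\phi^j_*A$ denotes $A$ regarded as an $A$-module via $\phi^j$. *)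

theory Defs
  imports "HOL-Computational_Algebra.Primes"
begin

text \<open>p-typical Witt vectors of length n over a ring A are represented as functions
  nat => A whose components with index >= n vanish.  Since the theorem concerns
  p-torsion free A, the ghost map is injective, and the Witt ring operations are
  characterised (and here defined) by acting componentwise on ghost components.\<close>

definition Wn :: "nat \<Rightarrow> (nat \<Rightarrow> 'a::comm_ring_1) set" where
  "Wn n = {x. \<forall>i\<ge>n. x i = 0}"

definition ghost :: "nat \<Rightarrow> (nat \<Rightarrow> 'a::comm_ring_1) \<Rightarrow> nat \<Rightarrow> 'a" where
  "ghost p x m = (\<Sum>i\<le>m. of_nat (p ^ i) * x i ^ (p ^ (m - i)))"

definition witt_add :: "nat \<Rightarrow> nat \<Rightarrow> (nat \<Rightarrow> 'a::comm_ring_1) \<Rightarrow> (nat \<Rightarrow> 'a) \<Rightarrow> (nat \<Rightarrow> 'a)" where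
  "witt_add p n x y = (THE z. z \<in> Wn n \<and> (\<forall>m<n. ghost p z m = ghost p x m + ghost p y m))"

definition witt_sub :: "nat \<Rightarrow> nat \<Rightarrow> (nat \<Rightarrow> 'a::comm_ring_1) \<Rightarrow> (nat \<Rightarrow> 'a) \<Rightarrow> (nat \<Rightarrow> 'a)" where
  "witt_sub p n x y = (THE z. z \<in> Wn n \<and> (\<forall>m<n. ghost p z m = ghost p x m - ghost p y m))"

definition witt_mult :: "nat \<Rightarrow> nat \<Rightarrow> (nat \<Rightarrow> 'a::comm_ring_1) \<Rightarrow> (nat \<Rightarrow> 'a) \<Rightarrow> (nat \<Rightarrow> 'a)" where
  "witt_mult p n x y = (THE z. z \<in> Wn n \<and> (\<forall>m<n. ghost p z m = ghost p x m * ghost p y m))"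

definition teich :: "nat \<Rightarrow> 'a::comm_ring_1 \<Rightarrow> (nat \<Rightarrow> 'a)" where
  "teich n a = (\<lambda>i. if i = 0 \<and> 0 < n then a else 0)"

definition verschiebung :: "nat \<Rightarrow> (nat \<Rightarrow> 'a::comm_ring_1) \<Rightarrow> (nat \<Rightarrow> 'a)" where
  "verschiebung n x = (\<lambda>i. if i = 0 \<or> n \<le> i then 0 else x (i - 1))"

definition s_phi :: "nat \<Rightarrow> ('a::comm_ring_1 \<Rightarrow> 'a) \<Rightarrow> nat \<Rightarrow> 'a \<Rightarrow> (nat \<Rightarrow> 'a)" where
  "s_phi p phi n a = (THE z. z \<in> Wn n \<and> (\<forall>m<n. ghost p z m = (phi ^^ m) a))"

definition DeltaW :: "nat \<Rightarrow> ('a::comm_ring_1 \<Rightarrow> 'a) \<Rightarrow> nat \<Rightarrow> (nat \<Rightarrow> 'a) \<Rightarrow> (nat \<Rightarrow> 'a)" where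
  "DeltaW p phi n \<alpha> = (THE \<beta>. \<beta> \<in> Wn (n - 1) \<and>
      verschiebung n \<beta> = witt_sub p n \<alpha> (s_phi p phi n (\<alpha> 0)))"

fun iterD :: "nat \<Rightarrow> ('a::comm_ring_1 \<Rightarrow> 'a) \<Rightarrow> nat \<Rightarrow> (nat \<Rightarrow> 'a) \<Rightarrow> (nat \<Rightarrow> 'a)" where
  "iterD p phi 0 \<alpha> = \<alpha>"
| "iterD p phi (Suc 0) \<alpha> = \<alpha>"
| "iterD p phi (Suc (Suc k)) \<alpha> = iterD p phi (Suc k) (DeltaW p phi (Suc (Suc k)) \<alpha>)"

definition Delta :: "nat \<Rightarrow> ('a::comm_ring_1 \<Rightarrow> 'a) \<Rightarrow> nat \<Rightarrow> 'a \<Rightarrow> 'a" where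
  "Delta p phi s a = (if s = 0 then a else iterD p phi (Suc s) (teich (Suc s) a) 0)"

text \<open>Psi_n : W_n(A) -> A + phi_*A + ... + phi^{n-1}_*A (elements of the target are
  functions nat => A vanishing from index n on).\<close>
definition Psi :: "nat \<Rightarrow> ('a::comm_ring_1 \<Rightarrow> 'a) \<Rightarrow> nat \<Rightarrow> (nat \<Rightarrow> 'a) \<Rightarrow> (nat \<Rightarrow> 'a)" where
  "Psi p phi n \<alpha> = (\<lambda>k. if k < n then (\<Sum>i\<le>k. Delta p phi (k - i) (\<alpha> i)) else 0)"

end

theory Submission
  imports Defs
begin

locale frob =
  fixes p :: nat and phi :: "'a::comm_ring_1 \<Rightarrow> 'a"
  assumes tf: "\<forall>x::'a. of_nat p * x = 0 \<longrightarrow> x = 0"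
    and p_pos: "0 < p"
    and phi_one: "phi 1 = 1"
    and phi_add: "\<forall>x y. phi (x + y) = phi x + phi y"
    and phi_mult: "\<forall>x y. phi (x * y) = phi x * phi y"
    and phi_frob: "\<forall>a. \<exists>b. phi a - a ^ p = of_nat p * b"
begin

abbreviation P :: 'a where "P \<equiv> of_nat p"

lemma phi_plus[simp]: "phi (x + y) = phi x + phi y" using phi_add by blast
lemma phi_times[simp]: "phi (x * y) = phi x * phi y" using phi_mult by blast
lemma phi_zero[simp]: "phi 0 = 0" using phi_plus[of 0 0] by simp
lemma phi_uminus[simp]: "phi (- x) = - phi x"
proof -
  have "phi x + phi (-x) = 0" using phi_plus[of x "-x"] by simp
  thus ?thesis by (metis neg_eq_iff_add_eq_0)
qed
lemma phi_diff[simp]: "phi (x - y) = phi x - phi y"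
  using phi_plus[of x "-y"] by simp
lemma phi_of_nat[simp]: "phi (of_nat n) = of_nat n"
  by (induction n) (simp_all add: phi_one)
lemma phi_power[simp]: "phi (x ^ n) = phi x ^ n"
  by (induction n) (simp_all add: phi_one)
lemma phi_sum: "phi (sum f A) = (\<Sum>i\<in>A. phi (f i))"
  by (induction A rule: infinite_finite_induct) simp_all

lemma cancelP: "P^k * u = P^k * v \<Longrightarrow> u = v"
proof (induction k)
  case 0 then show ?case by simp
next
  case (Suc k)
  have "P * (P^k * u - P^k * v) = 0" using Suc.prems by (simp add: algebra_simps)
  hence "P^k * u - P^k * v = 0" using tf by blast
  thus ?case using Suc.IH by simp
qed

lemma diff_dvd_pow: "(a - b) dvd (a ^ n - b ^ n)" for a b :: 'a
  using power_diff_sumr2[of a n b] by simp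

lemma stepF:
  assumes h: "P^(Suc j) dvd a - b"
  shows "P^(Suc (Suc j)) dvd a^p - b^p"
proof -
  have e: "a^p - b^p = (a - b) * (\<Sum>i<p. b^(p - Suc i) * a^i)" by (rule power_diff_sumr2)
  have Pab: "P dvd a - b" using h by (metis dvd_trans dvd_triv_left power_Suc)
  have "\<And>i. P dvd b^(p - Suc i) * a^i - b^(p - Suc i) * b^i"
  proof -
    fix i
    have "P dvd a^i - b^i" using Pab diff_dvd_pow dvd_trans by blast
    hence "P dvd b^(p - Suc i) * (a^i - b^i)" by simp
    thus "P dvd b^(p - Suc i) * a^i - b^(p - Suc i) * b^i" by (simp add: algebra_simps)
  qed
  hence d1: "P dvd (\<Sum>i<p. b^(p - Suc i) * a^i - b^(p - Suc i) * b^i)" by (simp add: dvd_sum)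
  have "(\<Sum>i<p. b^(p - Suc i) * b^i) = (\<Sum>i<p. b^(p - 1))"
    by (intro sum.cong) (auto simp: power_add[symmetric])
  also have "\<dots> = P * b^(p-1)" by simp
  finally have d2: "P dvd (\<Sum>i<p. b^(p - Suc i) * b^i)" by simp
  have "P dvd (\<Sum>i<p. b^(p - Suc i) * a^i)"
    using dvd_add[OF d1 d2] by (simp add: sum_subtractf)
  hence "P^(Suc j) * P dvd (a - b) * (\<Sum>i<p. b^(p - Suc i) * a^i)"
    using h by (rule mult_dvd_mono[rotated])
  thus ?thesis using e by (simp add: power_Suc2[symmetric] del: power_Suc)
qed

lemma stepE: "P dvd a - b \<Longrightarrow> P^(Suc j) dvd a^(p^j) - b^(p^j)"
proof (induction j)
  case 0 then show ?case by simp
next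
  case (Suc j)
  have "P^(Suc (Suc j)) dvd (a^(p^j))^p - (b^(p^j))^p" using stepF Suc by blast
  thus ?case by (simp add: power_mult[symmetric] power_Suc2 del: power_Suc)
qed

lemma frob_cong: "P^(Suc j) dvd (x^p)^(p^j) - phi x^(p^j)"
proof -
  obtain b where "phi x - x^p = P * b" using phi_frob by blast
  hence "x^p - phi x = P * (-b)" by (simp add: algebra_simps)
  hence "P dvd x^p - phi x" by simp
  thus ?thesis by (rule stepE)
qed

lemma ghost_alt: "ghost p z m = (\<Sum>i\<le>m. P^i * z i ^ p^(m-i))"
  by (simp add: ghost_def of_nat_power)

lemma ghost_split: "ghost p z m = (\<Sum>i<m. P^i * z i ^ p^(m-i)) + P^m * z m"
  by (simp add: ghost_alt lessThan_Suc_atMost[symmetric])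

lemma ghost0[simp]: "ghost p z 0 = z 0" by (simp add: ghost_def)

lemma ghost_cong: "(\<And>i. i \<le> m \<Longrightarrow> x i = y i) \<Longrightarrow> ghost p x m = ghost p y m"
  unfolding ghost_def by (intro sum.cong) auto

lemma phi_Ppow[simp]: "phi (P^i * y) = P^i * phi y" by simp

lemma convC: "P^(Suc k) dvd (\<Sum>i<Suc k. P^i * z i ^ p^(Suc k - i)) - phi (ghost p z k)"
proof -
  have a: "(\<Sum>i<Suc k. P^i * z i ^ p^(Suc k - i)) = (\<Sum>i\<le>k. P^i * (z i ^ p) ^ p^(k - i))"
    unfolding lessThan_Suc_atMost
    by (intro sum.cong) (auto simp: Suc_diff_le power_mult[symmetric] mult.commute)
  have b: "phi (ghost p z k) = (\<Sum>i\<le>k. P^i * phi (z i) ^ p^(k - i))"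
    by (simp add: ghost_alt phi_sum)
  have "P^(Suc k) dvd (\<Sum>i\<le>k. P^i * ((z i ^ p) ^ p^(k - i) - phi (z i) ^ p^(k - i)))"
  proof (rule dvd_sum)
    fix i assume "i \<in> {..k}"
    hence "Suc k = i + Suc (k - i)" by simp
    hence "P^(Suc k) = P^i * P^(Suc (k - i))" by (metis power_add)
    thus "P^(Suc k) dvd P^i * ((z i ^ p) ^ p^(k - i) - phi (z i) ^ p^(k - i))"
      using frob_cong[of "k - i" "z i"] by (simp add: mult_dvd_mono)
  qed
  thus ?thesis unfolding a b by (simp add: sum_subtractf right_diff_distrib)
qed

lemma conv: "1 \<le> m \<Longrightarrow> P^m dvd ghost p z m - phi (ghost p z (m-1))"
proof -
  assume "1 \<le> m"
  then obtain k where k: "m = Suc k" by (cases m) auto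
  have "ghost p z m - phi (ghost p z (m-1)) =
     ((\<Sum>i<Suc k. P^i * z i ^ p^(Suc k - i)) - phi (ghost p z k)) + P^(Suc k) * z (Suc k)"
    unfolding k by (subst ghost_split) simp
  thus ?thesis using convC[of k z] k by (metis dvd_add dvd_triv_left)
qed


lemma dwork:
  fixes g :: "nat \<Rightarrow> 'a"
  assumes h: "\<And>m. 1 \<le> m \<Longrightarrow> m < n \<Longrightarrow> P^m dvd g m - phi (g (m-1))"
  shows "\<exists>z\<in>Wn n. \<forall>m<n. ghost p z m = g m"
proof -
  have "k \<le> n \<Longrightarrow> \<exists>z\<in>Wn k. \<forall>m<k. ghost p z m = g m" for k
  proof (induction k)
    case 0 show ?case by (rule bexI[of _ "\<lambda>_. 0"]) (auto simp: Wn_def)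
  next
    case (Suc k)
    then obtain z where z: "z \<in> Wn k" "\<forall>m<k. ghost p z m = g m" by auto
    have "\<exists>c. g k = (\<Sum>i<k. P^i * z i ^ p^(k-i)) + P^k * c"
    proof (cases k)
      case 0 then show ?thesis by simp
    next
      case (Suc k')
      have a: "P^k dvd g k - phi (g k')" using h[of k] Suc \<open>Suc k \<le> n\<close> by simp
      have b: "P^k dvd (\<Sum>i<k. P^i * z i ^ p^(k-i)) - phi (ghost p z k')"
        using convC[of k' z] Suc by simp
      have "g k' = ghost p z k'" using z Suc by simp
      hence a': "P^k dvd g k - phi (ghost p z k')" using a by simp
      have "g k - (\<Sum>i<k. P^i * z i ^ p^(k-i)) =
            (g k - phi (ghost p z k')) - ((\<Sum>i<k. P^i * z i ^ p^(k-i)) - phi (ghost p z k'))"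
        by simp
      hence "P^k dvd g k - (\<Sum>i<k. P^i * z i ^ p^(k-i))"
        using dvd_diff[OF a' b] by simp
      then obtain c where "g k - (\<Sum>i<k. P^i * z i ^ p^(k-i)) = P^k * c" by (auto elim: dvdE)
      thus ?thesis by (metis diff_eq_eq add.commute)
    qed
    then obtain c where c: "g k = (\<Sum>i<k. P^i * z i ^ p^(k-i)) + P^k * c" by blast
    let ?z = "z(k := c)"
    have "?z \<in> Wn (Suc k)" using z(1) by (auto simp: Wn_def)
    moreover have "\<forall>m<Suc k. ghost p ?z m = g m"
    proof (intro allI impI)
      fix m assume m: "m < Suc k"
      show "ghost p ?z m = g m"
      proof (cases "m < k")
        case True
        have "ghost p ?z m = ghost p z m" using True by (intro ghost_cong) auto
        thus ?thesis using z True by simp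
      next
        case False
        hence mk: "m = k" using m by simp
        have "(\<Sum>i<k. P^i * ?z i ^ p^(k-i)) = (\<Sum>i<k. P^i * z i ^ p^(k-i))"
          by (intro sum.cong) auto
        thus ?thesis unfolding mk using c by (subst ghost_split) simp
      qed
    qed
    ultimately show ?case by blast
  qed
  thus ?thesis by simp
qed

lemma ghost_inj:
  fixes x y :: "nat \<Rightarrow> 'a"
  assumes "x \<in> Wn n" "y \<in> Wn n" "\<forall>m<n. ghost p x m = ghost p y m"
  shows "x = y"
proof (rule ext)
  fix i
  show "x i = y i"
  proof (induction i rule: less_induct)
    case (less i)
    show ?case
    proof (cases "i < n")
      case False then show ?thesis using assms by (simp add: Wn_def)
    next
      case True
      have "ghost p x i = ghost p y i" using assms True by simp
      moreover have "(\<Sum>j<i. P^j * x j ^ p^(i-j)) = (\<Sum>j<i. P^j * y j ^ p^(i-j))"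
        using less by (intro sum.cong) auto
      ultimately have "P^i * x i = P^i * y i" by (simp add: ghost_split[of x] ghost_split[of y])
      thus ?thesis by (rule cancelP)
    qed
  qed
qed

lemma witt_the:
  fixes G :: "nat \<Rightarrow> 'a"
  assumes "\<exists>z\<in>Wn n. \<forall>m<n. ghost p z m = G m"
  shows "(THE z. z \<in> Wn n \<and> (\<forall>m<n. ghost p z m = G m)) \<in> Wn n \<and>
    (\<forall>m<n. ghost p (THE z. z \<in> Wn n \<and> (\<forall>m<n. ghost p z m = G m)) m = G m)"
proof -
  obtain z where z: "z \<in> Wn n" "\<forall>m<n. ghost p z m = G m" using assms by blast
  have "\<exists>!z. z \<in> Wn n \<and> (\<forall>m<n. ghost p z m = G m)"
  proof (rule ex1I[of _ z])
    show "z \<in> Wn n \<and> (\<forall>m<n. ghost p z m = G m)" using z by blast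
    fix y assume "y \<in> Wn n \<and> (\<forall>m<n. ghost p y m = G m)"
    thus "y = z" using z ghost_inj[of y n z] by auto
  qed
  from theI'[OF this] show ?thesis .
qed

lemma s_phi_prop: "s_phi p phi n a \<in> Wn n \<and> (\<forall>m<n. ghost p (s_phi p phi n a) m = (phi^^m) a)"
  unfolding s_phi_def
  apply (rule witt_the, rule dwork)
  subgoal for m by (cases m) simp_all
  done

lemma witt_add_prop:
  fixes x y :: "nat \<Rightarrow> 'a"
  shows "witt_add p n x y \<in> Wn n \<and>
   (\<forall>m<n. ghost p (witt_add p n x y) m = ghost p x m + ghost p y m)"
  unfolding witt_add_def
  apply (rule witt_the, rule dwork)
  subgoal for m
    using dvd_add[OF conv[of m x] conv[of m y]] by (simp add: algebra_simps)
  done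

lemma witt_sub_prop:
  fixes x y :: "nat \<Rightarrow> 'a"
  shows "witt_sub p n x y \<in> Wn n \<and>
   (\<forall>m<n. ghost p (witt_sub p n x y) m = ghost p x m - ghost p y m)"
  unfolding witt_sub_def
  apply (rule witt_the, rule dwork)
  subgoal for m
    using dvd_diff[OF conv[of m x] conv[of m y]] by (simp add: algebra_simps)
  done

lemma witt_mult_prop:
  fixes x y :: "nat \<Rightarrow> 'a"
  shows "witt_mult p n x y \<in> Wn n \<and>
   (\<forall>m<n. ghost p (witt_mult p n x y) m = ghost p x m * ghost p y m)"
  unfolding witt_mult_def
  apply (rule witt_the, rule dwork)
  subgoal for m
  proof -
    assume "1 \<le> m"
    have "P^m dvd ghost p x m * (ghost p y m - phi (ghost p y (m-1)))
           + phi (ghost p y (m-1)) * (ghost p x m - phi (ghost p x (m-1)))"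
      using conv[OF \<open>1 \<le> m\<close>, of x] conv[OF \<open>1 \<le> m\<close>, of y] by (simp add: dvd_add)
    thus ?thesis by (simp add: algebra_simps)
  qed
  done


lemma DeltaW_prop:
  fixes \<alpha> :: "nat \<Rightarrow> 'a"
  assumes n: "1 \<le> n" and aW: "\<alpha> \<in> Wn n"
  shows "DeltaW p phi n \<alpha> \<in> Wn (n-1) \<and>
    (\<forall>m. Suc m < n \<longrightarrow> P * ghost p (DeltaW p phi n \<alpha>) m = ghost p \<alpha> (Suc m) - (phi^^Suc m) (\<alpha> 0))"
proof -
  define s where "s = s_phi p phi n (\<alpha> 0)"
  define z where "z = witt_sub p n \<alpha> s"
  have s: "\<forall>m<n. ghost p s m = (phi^^m) (\<alpha> 0)" using s_phi_prop s_def by blast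
  have zW: "z \<in> Wn n" and zg: "\<forall>m<n. ghost p z m = ghost p \<alpha> m - ghost p s m"
    using witt_sub_prop[of n \<alpha> s] z_def by blast+
  have z0: "z 0 = 0" using zg s n by (metis ghost0 funpow_0 diff_self less_le_trans zero_less_one)
  define \<beta> where "\<beta> = (\<lambda>i. z (Suc i))"
  have bW: "\<beta> \<in> Wn (n-1)" using zW by (auto simp: Wn_def \<beta>_def)
  have vb: "verschiebung n \<beta> = z"
  proof (rule ext)
    fix i show "verschiebung n \<beta> i = z i"
      using z0 zW by (cases i) (auto simp: verschiebung_def \<beta>_def Wn_def)
  qed
  have D: "DeltaW p phi n \<alpha> = \<beta>"
    unfolding DeltaW_def s_def[symmetric] z_def[symmetric]
  proof (rule the_equality)
    show "\<beta> \<in> Wn (n - 1) \<and> verschiebung n \<beta> = z" using bW vb by simp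
    fix \<beta>' assume h: "\<beta>' \<in> Wn (n - 1) \<and> verschiebung n \<beta>' = z"
    show "\<beta>' = \<beta>"
    proof (rule ext)
      fix i
      show "\<beta>' i = \<beta> i"
      proof (cases "Suc i < n")
        case True
        have "verschiebung n \<beta>' (Suc i) = z (Suc i)" using h by simp
        thus ?thesis using True by (simp add: verschiebung_def \<beta>_def)
      next
        case False
        thus ?thesis using h zW by (auto simp: Wn_def \<beta>_def)
      qed
    qed
  qed
  have "P * ghost p \<beta> m = ghost p z (Suc m)" for m
  proof -
    have "ghost p z (Suc m) = z 0 ^ p ^ Suc m + (\<Sum>i\<le>m. P^(Suc i) * z (Suc i) ^ p^(m - i))"
      unfolding ghost_alt sum.atMost_Suc_shift by simp
    also have "\<dots> = (\<Sum>i\<le>m. P^(Suc i) * z (Suc i) ^ p^(m - i))" using z0 p_pos by (simp add: power_0_left)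
    also have "\<dots> = P * ghost p \<beta> m"
      by (simp add: ghost_alt sum_distrib_left \<beta>_def mult.assoc)
    finally show ?thesis by simp
  qed
  thus ?thesis using bW zg s D by auto
qed

lemma iterD_prop:
  fixes \<beta> :: "nat \<Rightarrow> 'a"
  shows "\<beta> \<in> Wn (Suc (Suc k)) \<Longrightarrow>
    P^(Suc k) * iterD p phi (Suc (Suc k)) \<beta> 0 = ghost p \<beta> (Suc k) - phi (ghost p \<beta> k)"
proof (induction k arbitrary: \<beta>)
  case 0
  have "P * ghost p (DeltaW p phi (Suc (Suc 0)) \<beta>) 0 = ghost p \<beta> 1 - (phi^^1) (\<beta> 0)"
    using DeltaW_prop[of "Suc (Suc 0)" \<beta>] 0 by simp
  thus ?case by simp
next
  case (Suc k)
  define \<Delta> where "\<Delta> = DeltaW p phi (Suc (Suc (Suc k))) \<beta>"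
  have dp: "\<Delta> \<in> Wn (Suc (Suc k)) \<and>
    (\<forall>m. Suc m < Suc (Suc (Suc k)) \<longrightarrow> P * ghost p \<Delta> m = ghost p \<beta> (Suc m) - (phi^^Suc m) (\<beta> 0))"
    using DeltaW_prop[of "Suc (Suc (Suc k))" \<beta>] Suc.prems \<Delta>_def by simp
  have IH: "P^(Suc k) * iterD p phi (Suc (Suc k)) \<Delta> 0 = ghost p \<Delta> (Suc k) - phi (ghost p \<Delta> k)"
    using Suc.IH dp by blast
  have "P^(Suc (Suc k)) * iterD p phi (Suc (Suc (Suc k))) \<beta> 0
      = P * (P^(Suc k) * iterD p phi (Suc (Suc k)) \<Delta> 0)"
    by (simp add: \<Delta>_def mult.assoc)
  also have "\<dots> = P * ghost p \<Delta> (Suc k) - phi (P * ghost p \<Delta> k)"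
    using IH by (simp add: right_diff_distrib)
  also have "\<dots> = ghost p \<beta> (Suc (Suc k)) - phi (ghost p \<beta> (Suc k))"
    using dp by simp
  finally show ?case .
qed

lemma ghost_teich: fixes a :: 'a shows "ghost p (teich (Suc n) a) m = a ^ p ^ m"
proof (cases m)
  case 0 then show ?thesis by (simp add: teich_def)
next
  case (Suc k)
  then show ?thesis using p_pos
    unfolding Suc ghost_alt sum.atMost_Suc_shift by (simp add: teich_def power_0_left)
qed

lemma Delta_prop: "P^(Suc s) * Delta p phi (Suc s) a = a^(p^Suc s) - phi (a^(p^s))"
proof -
  have "teich (Suc (Suc s)) a \<in> Wn (Suc (Suc s))" by (simp add: Wn_def teich_def)
  from iterD_prop[OF this] show ?thesis
    by (simp add: Delta_def ghost_teich del: power_Suc phi_power)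
qed

lemma phi_Pi: "phi (P^i) = P^i" by simp

lemma Delta0: "Delta p phi 0 x = x" by (simp add: Delta_def)

lemma Psi_ghost:
  fixes \<alpha> :: "nat \<Rightarrow> 'a"
  assumes "k < n"
  shows "P^k * Psi p phi n \<alpha> k = (if k = 0 then ghost p \<alpha> 0 else ghost p \<alpha> k - phi (ghost p \<alpha> (k-1)))"
proof (cases k)
  case 0 then show ?thesis using assms by (simp add: Psi_def Delta_def)
next
  case (Suc k')
  have t: "P^(Suc k') * Delta p phi (Suc k' - i) (\<alpha> i) =
      P^i * (\<alpha> i ^ p^(Suc k' - i) - phi (\<alpha> i ^ p^(k' - i)))" if "i \<le> k'" for i
  proof -
    have e: "Suc k' - i = Suc (k' - i)" using that by simp
    have "Suc k' = i + Suc (k' - i)" using that by simp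
    hence "P^(Suc k') = P^i * P^(Suc (k' - i))" by (metis power_add)
    thus ?thesis unfolding e by (simp only: mult.assoc Delta_prop)
  qed
  have "P^k * Psi p phi n \<alpha> k = (\<Sum>i\<le>k'. P^(Suc k') * Delta p phi (Suc k' - i) (\<alpha> i)) + P^(Suc k') * \<alpha> (Suc k')"
    using assms Suc by (simp add: Psi_def sum_distrib_left distrib_left Delta0 del: power_Suc)
  also have "\<dots> = (\<Sum>i\<le>k'. P^i * (\<alpha> i ^ p^(Suc k' - i) - phi (\<alpha> i ^ p^(k' - i)))) + P^(Suc k') * \<alpha> (Suc k')"
    using t by simp
  also have "\<dots> = ghost p \<alpha> k - phi (ghost p \<alpha> (k-1))"
    unfolding Suc by (simp add: ghost_alt phi_sum right_diff_distrib sum_subtractf phi_Pi del: power_Suc phi_power)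
  finally show ?thesis using Suc by simp
qed


lemma Psi_split: "k < n \<Longrightarrow> Psi p phi n \<alpha> k = \<alpha> k + (\<Sum>i<k. Delta p phi (k-i) (\<alpha> i))"
  by (simp add: Psi_def lessThan_Suc_atMost[symmetric] Delta0)

lemma Psi_bij: "bij_betw (Psi p phi n) (Wn n) (Wn n)"
  unfolding bij_betw_def
proof
  show "inj_on (Psi p phi n) (Wn n)"
  proof (rule inj_onI)
    fix x y :: "nat \<Rightarrow> 'a" assume x: "x \<in> Wn n" and y: "y \<in> Wn n" and e: "Psi p phi n x = Psi p phi n y"
    show "x = y"
    proof (rule ext)
      fix i show "x i = y i"
      proof (induction i rule: less_induct)
        case (less i)
        show ?case
        proof (cases "i < n")
          case False then show ?thesis using x y by (simp add: Wn_def)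
        next
          case True
          have "Psi p phi n x i = Psi p phi n y i" using e by simp
          moreover have "(\<Sum>j<i. Delta p phi (i-j) (x j)) = (\<Sum>j<i. Delta p phi (i-j) (y j))"
            using less by (intro sum.cong) auto
          ultimately show ?thesis using True by (simp add: Psi_split)
        qed
      qed
    qed
  qed
  show "Psi p phi n ` Wn n = Wn n"
  proof
    show "Psi p phi n ` Wn n \<subseteq> Wn n" by (auto simp: Wn_def Psi_def)
    show "Wn n \<subseteq> Psi p phi n ` Wn n"
    proof
      fix y :: "nat \<Rightarrow> 'a" assume y: "y \<in> Wn n"
      have "k \<le> n \<Longrightarrow> \<exists>x\<in>Wn k. \<forall>j<k. Psi p phi n x j = y j" for k
      proof (induction k)
        case 0 show ?case by (rule bexI[of _ "\<lambda>_. 0"]) (auto simp: Wn_def)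
      next
        case (Suc k)
        then obtain x where x: "x \<in> Wn k" "\<forall>j<k. Psi p phi n x j = y j" by auto
        define c where "c = y k - (\<Sum>i<k. Delta p phi (k-i) (x i))"
        let ?x = "x(k := c)"
        have "?x \<in> Wn (Suc k)" using x(1) by (auto simp: Wn_def)
        moreover have "\<forall>j<Suc k. Psi p phi n ?x j = y j"
        proof (intro allI impI)
          fix j assume j: "j < Suc k"
          have jn: "j < n" using j Suc.prems by simp
          show "Psi p phi n ?x j = y j"
          proof (cases "j < k")
            case True
            have "Psi p phi n ?x j = Psi p phi n x j"
              using True jn by (simp add: Psi_split)
            thus ?thesis using x True by simp
          next
            case False
            hence jk: "j = k" using j by simp
            have "(\<Sum>i<k. Delta p phi (k-i) (?x i)) = (\<Sum>i<k. Delta p phi (k-i) (x i))"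
              by (intro sum.cong) auto
            thus ?thesis using jn unfolding jk by (simp add: Psi_split c_def)
          qed
        qed
        ultimately show ?case by blast
      qed
      from this[of n] obtain x where x: "x \<in> Wn n" "\<forall>j<n. Psi p phi n x j = y j" by auto
      have "Psi p phi n x = y"
      proof (rule ext)
        fix j show "Psi p phi n x j = y j"
          using x y by (cases "j < n") (auto simp: Wn_def Psi_def)
      qed
      thus "y \<in> Psi p phi n ` Wn n" using x by blast
    qed
  qed
qed

lemma Psi_add:
  fixes x y :: "nat \<Rightarrow> 'a"
  shows "Psi p phi n (witt_add p n x y) = (\<lambda>k. Psi p phi n x k + Psi p phi n y k)"
proof (rule ext)
  fix k
  define z where "z = witt_add p n x y"
  have gz: "\<forall>m<n. ghost p z m = ghost p x m + ghost p y m" using witt_add_prop z_def by blast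
  show "Psi p phi n z k = Psi p phi n x k + Psi p phi n y k"
  proof (cases "k < n")
    case False then show ?thesis by (simp add: Psi_def)
  next
    case True
    have "P^k * Psi p phi n z k = P^k * (Psi p phi n x k + Psi p phi n y k)"
      using Psi_ghost[OF True, of z] Psi_ghost[OF True, of x] Psi_ghost[OF True, of y] gz gz[rule_format, of 0] True
      by (cases "k = 0") (simp_all add: distrib_left)
    thus ?thesis by (rule cancelP)
  qed
qed

lemma Psi_smult:
  fixes x :: "nat \<Rightarrow> 'a"
  shows "Psi p phi n (witt_mult p n (s_phi p phi n a) x) = (\<lambda>k. (phi ^^ k) a * Psi p phi n x k)"
proof (rule ext)
  fix k
  define z where "z = witt_mult p n (s_phi p phi n a) x"
  have gz: "\<forall>m<n. ghost p z m = (phi ^^ m) a * ghost p x m"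
    using witt_mult_prop[of n "s_phi p phi n a" x] s_phi_prop[of n a] z_def by simp
  show "Psi p phi n z k = (phi ^^ k) a * Psi p phi n x k"
  proof (cases "k < n")
    case False then show ?thesis by (simp add: Psi_def)
  next
    case True
    have "P^k * Psi p phi n z k = (phi ^^ k) a * (P^k * Psi p phi n x k)"
    proof (cases k)
      case 0 then show ?thesis using Psi_ghost[OF True, of z] Psi_ghost[OF True, of x] gz gz[rule_format, of 0] True by simp
    next
      case (Suc k')
      then show ?thesis using Psi_ghost[OF True, of z] Psi_ghost[OF True, of x] gz True
        by (simp add: right_diff_distrib del: power_Suc)
    qed
    thus ?thesis by (simp add: mult.left_commute cancelP)
  qed
qed

end

theorem theorem3p7:
  fixes p :: nat and phi :: "'a::comm_ring_1 \<Rightarrow> 'a" and n :: nat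
  assumes "prime p"
    and torsion_free: "\<forall>x::'a. of_nat p * x = 0 \<longrightarrow> x = 0"
    and phi_one: "phi 1 = 1"
    and phi_add: "\<forall>x y. phi (x + y) = phi x + phi y"
    and phi_mult: "\<forall>x y. phi (x * y) = phi x * phi y"
    and phi_frob: "\<forall>a. \<exists>b. phi a - a ^ p = of_nat p * b"
    and "1 \<le> n"
  shows "bij_betw (Psi p phi n) (Wn n) (Wn n)
    \<and> (\<forall>x\<in>Wn n. \<forall>y\<in>Wn n. Psi p phi n (witt_add p n x y) = (\<lambda>k. Psi p phi n x k + Psi p phi n y k))
    \<and> (\<forall>a. \<forall>x\<in>Wn n. Psi p phi n (witt_mult p n (s_phi p phi n a) x)
                      = (\<lambda>k. (phi ^^ k) a * Psi p phi n x k))"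
proof -
  interpret frob p phi
    using assms prime_gt_0_nat by unfold_locales auto
  show ?thesis using Psi_bij Psi_add Psi_smult by blast
qed

end
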